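(* For every $\mathrm{PTL}\times\mathbf{S5}$ formula $\varphi$, let $t_1(\varphi)$ be the $\mathrm{SLTL}$ formula obtained from $\varphi$ by replacing every occurrence of $\Diamond$ by $\Diamond_{*}$ and every occurrence of $\Box$ by $\Box_{*}$. Then $\varphi$ is $\mathrm{PTL}\times\mathbf{S5}$-satisfiable if and only if $t_1(\varphi)$ is $\mathrm{SLTL}$-satisfiable.
   Context: Fix a countably infinite set $\mathcal{P}$ of propositional variables and a countably infinite set $\mathcal{S}$ of standpoint symbols containing a distinguished universal standpoint symbol $*$. SLTL: formulae are given by $\varphi ::= p \mid s \preceq s' \mid \neg\varphi \mid \varphi\wedge\varphi \mid \Diamond_s\varphi \mid \Box_s\varphi \mid X\varphi \mid \varphi\,U\,\varphi$ with $p\in\mathcal{P}$, $s,s'\in\mathcal{S}$. A model is $M=(\Pi,\lambda)$ where $\Pi\neq\emptyset$ is a set of traces $\sigma:\mathbb{N}\to 2^{\mathcal{P}}$ and $\lambda:\mathcal{S}\to 2^{\Pi}\setminus\{\emptyset\}$ with $\lambda( * )=\Pi$. For $\sigma\in\Pi$, $i\in\mathbb{N}$: $M,\sigma,i\models p$ iff $p\in\sigma(i)$; $M,\sigma,i\models s\preceq s'$ iff $\lambda(s)\subseteq\lambda(s')$; Boolean clauses as usual; $M,\sigma,i\models\Diamond_s\psi$ iff $M,\sigma',i\models\psi$ for some $\sigma'\in\lambda(s)$; $M,\sigma,i\models\Box_s\psi$ iff $M,\sigma',i\models\psi$ for all $\sigma'\in\lambda(s)$; $M,\sigma,i\models X\psi$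 iff $M,\sigma,i+1\models\psi$; $M,\sigma,i\models\psi\,U\,\chi$ iff there is $i'\ge i$ with $M,\sigma,i'\models\chi$ and $M,\sigma,i''\models\psi$ for all $i\le i''<i'$. A formula $\varphi$ is SLTL-satisfiable iff there exist a model $M=(\Pi,\lambda)$ and $\sigma\in\Pi$ with $M,\sigma,0\models\varphi$. $\mathrm{PTL}\times\mathbf{S5}$: formulae are given by $\varphi ::= p \mid \neg\varphi\mid\varphi\wedge\varphi\mid\Diamond\varphi\mid\Box\varphi\mid X\varphi\mid\varphi\,U\,\varphi$. A model is $M=(\mathbb{N}\times W,R,L)$ with $W\neq\emptyset$, $R$ an equivalence relation on $W$, and $L:\mathbb{N}\times W\to 2^{\mathcal{P}}$. Semantics: $M,(n,w)\models p$ iff $p\in L(n,w)$; Boolean clauses as usual; $M,(n,w)\models\Diamond\psi$ iff $M,(n,w')\models\psi$ for some $w'$ with $wRw'$; $M,(n,w)\models\Box\psi$ iff $M,(n,w')\models\psi$ for all $w'$ with $wRw'$; $M,(n,w)\models X\psi$ iff $M,(n+1,w)\models\psi$; $M,(n,w)\models\psi\,U\,\chi$ iff there is $n'\ge n$ with $M,(n',w)\models\chi$ and $M,(n'',w)\models\psi$ for all $n\le n''<n'$. A formula is satisfiable iff it holds at some $(n,w)$ of some model. *)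

theory Defs
  imports Main
begin

(* Propositional variables and standpoint symbols are both encoded by nat
   (countably infinite).  The standpoint symbol 0 is the universal standpoint *. *)
type_synonym pvar = nat
type_synonym stsym = nat

definition univ_st :: stsym where "univ_st = 0"

type_synonym trace = "nat \<Rightarrow> pvar set"

datatype sltl =
    SProp pvar
  | SSharp stsym stsym
  | SNot sltl
  | SAnd sltl sltl
  | SDia stsym sltl
  | SBox stsym sltl
  | SNext sltl
  | SUntil sltl sltl

definition sltl_model :: "trace set \<Rightarrow> (stsym \<Rightarrow> trace set) \<Rightarrow> bool" where
  "sltl_model Pi lam \<longleftrightarrow> Pi \<noteq> {} \<and> (\<forall>s. lam s \<subseteq> Pi \<and> lam s \<noteq> {}) \<and> lam univ_st = Pi"

fun sltl_sem :: "trace set \<Rightarrow> (stsym \<Rightarrow> trace set) \<Rightarrow> trace \<Rightarrow> nat \<Rightarrow> sltl \<Rightarrow> bool" where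
  "sltl_sem Pi lam \<sigma> i (SProp p) \<longleftrightarrow> p \<in> \<sigma> i"
| "sltl_sem Pi lam \<sigma> i (SSharp s s') \<longleftrightarrow> lam s \<subseteq> lam s'"
| "sltl_sem Pi lam \<sigma> i (SNot \<psi>) \<longleftrightarrow> \<not> sltl_sem Pi lam \<sigma> i \<psi>"
| "sltl_sem Pi lam \<sigma> i (SAnd \<psi> \<chi>) \<longleftrightarrow> sltl_sem Pi lam \<sigma> i \<psi> \<and> sltl_sem Pi lam \<sigma> i \<chi>"
| "sltl_sem Pi lam \<sigma> i (SDia s \<psi>) \<longleftrightarrow> (\<exists>\<sigma>'\<in>lam s. sltl_sem Pi lam \<sigma>' i \<psi>)"
| "sltl_sem Pi lam \<sigma> i (SBox s \<psi>) \<longleftrightarrow> (\<forall>\<sigma>'\<in>lam s. sltl_sem Pi lam \<sigma>' i \<psi>)"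
| "sltl_sem Pi lam \<sigma> i (SNext \<psi>) \<longleftrightarrow> sltl_sem Pi lam \<sigma> (Suc i) \<psi>"
| "sltl_sem Pi lam \<sigma> i (SUntil \<psi> \<chi>) \<longleftrightarrow>
     (\<exists>i'\<ge>i. sltl_sem Pi lam \<sigma> i' \<chi> \<and> (\<forall>i''. i \<le> i'' \<and> i'' < i' \<longrightarrow> sltl_sem Pi lam \<sigma> i'' \<psi>))"

definition sltl_sat :: "sltl \<Rightarrow> bool" where
  "sltl_sat \<phi> \<longleftrightarrow> (\<exists>Pi lam \<sigma>. sltl_model Pi lam \<and> \<sigma> \<in> Pi \<and> sltl_sem Pi lam \<sigma> 0 \<phi>)"

datatype ptl =
    PProp pvar
  | PNot ptl
  | PAnd ptl ptl
  | PDia ptl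
  | PBox ptl
  | PNext ptl
  | PUntil ptl ptl

definition ptl_model :: "'w set \<Rightarrow> ('w \<times> 'w) set \<Rightarrow> bool" where
  "ptl_model W R \<longleftrightarrow> W \<noteq> {} \<and> equiv W R"

fun ptl_sem :: "'w set \<Rightarrow> ('w \<times> 'w) set \<Rightarrow> (nat \<Rightarrow> 'w \<Rightarrow> pvar set) \<Rightarrow> nat \<Rightarrow> 'w \<Rightarrow> ptl \<Rightarrow> bool" where
  "ptl_sem W R L n w (PProp p) \<longleftrightarrow> p \<in> L n w"
| "ptl_sem W R L n w (PNot \<psi>) \<longleftrightarrow> \<not> ptl_sem W R L n w \<psi>"
| "ptl_sem W R L n w (PAnd \<psi> \<chi>) \<longleftrightarrow> ptl_sem W R L n w \<psi> \<and> ptl_sem W R L n w \<chi>"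
| "ptl_sem W R L n w (PDia \<psi>) \<longleftrightarrow> (\<exists>w'. (w, w') \<in> R \<and> ptl_sem W R L n w' \<psi>)"
| "ptl_sem W R L n w (PBox \<psi>) \<longleftrightarrow> (\<forall>w'. (w, w') \<in> R \<longrightarrow> ptl_sem W R L n w' \<psi>)"
| "ptl_sem W R L n w (PNext \<psi>) \<longleftrightarrow> ptl_sem W R L (Suc n) w \<psi>"
| "ptl_sem W R L n w (PUntil \<psi> \<chi>) \<longleftrightarrow>
     (\<exists>n'\<ge>n. ptl_sem W R L n' w \<chi> \<and> (\<forall>n''. n \<le> n'' \<and> n'' < n' \<longrightarrow> ptl_sem W R L n'' w \<psi>))"

definition ptl_sat_in :: "'w itself \<Rightarrow> ptl \<Rightarrow> bool" where
  "ptl_sat_in _ \<phi> \<longleftrightarrow> (\<exists>(W::'w set) R L n w. ptl_model W R \<and> w \<in> W \<and> ptl_sem W R L n w \<phi>)"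

fun t1 :: "ptl \<Rightarrow> sltl" where
  "t1 (PProp p) = SProp p"
| "t1 (PNot \<psi>) = SNot (t1 \<psi>)"
| "t1 (PAnd \<psi> \<chi>) = SAnd (t1 \<psi>) (t1 \<chi>)"
| "t1 (PDia \<psi>) = SDia univ_st (t1 \<psi>)"
| "t1 (PBox \<psi>) = SBox univ_st (t1 \<psi>)"
| "t1 (PNext \<psi>) = SNext (t1 \<psi>)"
| "t1 (PUntil \<psi> \<chi>) = SUntil (t1 \<psi>) (t1 \<chi>)"

end

theory Submission
  imports Defs
begin

lemma dir2:
  assumes "lam univ_st = Pi" "\<tau> \<in> Pi"
  shows "ptl_sem Pi (Pi \<times> Pi) (\<lambda>i t. t i) i \<tau> \<psi> \<longleftrightarrow> sltl_sem Pi lam \<tau> i (t1 \<psi>)"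
  using assms(2)
proof (induction \<psi> arbitrary: \<tau> i)
  case (PDia \<psi>) then show ?case using assms(1) by auto
next
  case (PBox \<psi>) then show ?case using assms(1) by auto
qed auto

lemma dir1:
  assumes "equiv W R" "w \<in> W" "v \<in> R `` {w}"
  shows "ptl_sem W R L (n + i) v \<psi> \<longleftrightarrow>
    sltl_sem ((\<lambda>u j. L (n + j) u) ` (R `` {w})) (\<lambda>s. (\<lambda>u j. L (n + j) u) ` (R `` {w}))
       (\<lambda>j. L (n + j) v) i (t1 \<psi>)"
  (is "_ \<longleftrightarrow> sltl_sem ?Pi ?lam _ _ _")
  using assms(3)
proof (induction \<psi> arbitrary: v i)
  case (PDia \<psi>)
  have "(v, w') \<in> R \<longleftrightarrow> w' \<in> R `` {w}" for w'
    proof -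
    have "(w, v) \<in> R" using PDia.prems by simp
    then have "R `` {v} = R `` {w}" using equiv_class_eq[OF assms(1)] by (metis equiv_class_eq_iff[OF assms(1)])
    then show ?thesis by blast
  qed
  then show ?case using PDia.IH by (simp cong: rev_conj_cong) blast
next
  case (PBox \<psi>)
  have "(v, w') \<in> R \<longleftrightarrow> w' \<in> R `` {w}" for w'
    proof -
    have "(w, v) \<in> R" using PBox.prems by simp
    then have "R `` {v} = R `` {w}" using equiv_class_eq[OF assms(1)] by (metis equiv_class_eq_iff[OF assms(1)])
    then show ?thesis by blast
  qed
  then show ?case using PBox.IH by simp blast
next
  case (PNext \<psi>)
  then show ?case by (simp add: add_Suc_right[symmetric] del: add_Suc_right)
next
  case (PUntil a b)
  note IH1 = PUntil.IH(1)[OF PUntil.prems] and IH2 = PUntil.IH(2)[OF PUntil.prems]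
  show ?case
  proof
    assume "ptl_sem W R L (n + i) v (PUntil a b)"
    then obtain n' where h: "n' \<ge> n + i" "ptl_sem W R L n' v b"
      "\<forall>n''. n + i \<le> n'' \<and> n'' < n' \<longrightarrow> ptl_sem W R L n'' v a" by auto
    then obtain k where k: "n' = n + (i + k)" using nat_le_iff_add by (metis add.assoc)
    have "\<forall>i''. i \<le> i'' \<and> i'' < i + k \<longrightarrow> ptl_sem W R L (n + i'') v a"
      using h(3) k by auto
    then show "sltl_sem ?Pi ?lam (\<lambda>j. L (n + j) v) i (t1 (PUntil a b))"
      using h(2) k IH1 IH2 by (auto intro!: exI[of _ "i + k"])
  next
    assume "sltl_sem ?Pi ?lam (\<lambda>j. L (n + j) v) i (t1 (PUntil a b))"
    then obtain i' where h: "i' \<ge> i" "sltl_sem ?Pi ?lam (\<lambda>j. L (n + j) v) i' (t1 b)"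
      "\<forall>i''. i \<le> i'' \<and> i'' < i' \<longrightarrow> sltl_sem ?Pi ?lam (\<lambda>j. L (n + j) v) i'' (t1 a)" by auto
    have "\<forall>n''. n + i \<le> n'' \<and> n'' < n + i' \<longrightarrow> ptl_sem W R L n'' v a"
    proof safe
      fix n'' assume "n + i \<le> n''" "n'' < n + i'"
      then obtain j where "n'' = n + j" "i \<le> j" "j < i'" by (metis add_le_imp_le_left le_add1 le_trans nat_le_iff_add add_less_cancel_left)
      then show "ptl_sem W R L n'' v a" using h(3) IH1 by auto
    qed
    then show "ptl_sem W R L (n + i) v (PUntil a b)"
      using h IH2 by (auto intro!: exI[of _ "n + i'"])
  qed
qed auto


theorem lemma1:
  fixes \<phi> :: ptl
  shows "((\<exists>(T::'w itself). ptl_sat_in T \<phi>) \<longrightarrow> sltl_sat (t1 \<phi>))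
       \<and> (sltl_sat (t1 \<phi>) \<longrightarrow> ptl_sat_in TYPE(trace) \<phi>)"
proof safe
  fix T :: "'w itself"
  assume "ptl_sat_in T \<phi>"
  then obtain W :: "'w set" and R L n w where m: "ptl_model W R" "w \<in> W" "ptl_sem W R L n w \<phi>"
    unfolding ptl_sat_in_def by blast
  have eq: "equiv W R" using m(1) unfolding ptl_model_def by auto
  have wc: "w \<in> R `` {w}" using eq m(2) unfolding equiv_def refl_on_def by auto
  define Pi where "Pi = (\<lambda>u j. L (n + j) u) ` (R `` {w})"
  have "sltl_model Pi (\<lambda>s. Pi)" using wc unfolding sltl_model_def Pi_def univ_st_def by auto
  moreover have "(\<lambda>j. L (n + j) w) \<in> Pi" using wc unfolding Pi_def by auto
  moreover have "sltl_sem Pi (\<lambda>s. Pi) (\<lambda>j. L (n + j) w) 0 (t1 \<phi>)"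
    using dir1[OF eq m(2) wc, of L n 0 \<phi>] m(3) unfolding Pi_def by simp
  ultimately show "sltl_sat (t1 \<phi>)" unfolding sltl_sat_def by blast
next
  assume "sltl_sat (t1 \<phi>)"
  then obtain Pi lam \<sigma> where m: "sltl_model Pi lam" "\<sigma> \<in> Pi" "sltl_sem Pi lam \<sigma> 0 (t1 \<phi>)"
    unfolding sltl_sat_def by blast
  have "ptl_model Pi (Pi \<times> Pi)" using m(2) unfolding ptl_model_def equiv_def refl_on_def sym_def trans_def
    by auto
  moreover have "ptl_sem Pi (Pi \<times> Pi) (\<lambda>i t. t i) 0 \<sigma> \<phi>"
    using dir2[of lam Pi \<sigma> 0 \<phi>] m unfolding sltl_model_def by auto
  ultimately show "ptl_sat_in TYPE(trace) \<phi>" using m(2) unfolding ptl_sat_in_def by blast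
qed

end
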